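(* Let $L,M$ be distributive lattices and $T:L\to M$ a surjective lattice homomorphism. Then the induced Banach lattice homomorphism $\overline T:\mathrm{FBL}\langle L\rangle\to\mathrm{FBL}\langle M\rangle$, i.e. the unique Banach lattice homomorphism with $\overline T(\delta_x)=\delta_{Tx}$ for all $x\in L$, is surjective.
   Context: For a distributive lattice $L$, $L^*$ is the set of all lattice homomorphisms $x^*:L\to[-1,1]$; for $x\in L$, $\delta_x:L^*\to\mathbb R$ is $\delta_x(x^* )=x^*(x)$. A function $f:L^*\to\mathbb R$ is positively homogeneous if $f(\lambda x^* )=\lambda f(x^* )$ whenever $\lambda\ge0$ and $\lambda x^*\in L^*$; for such $f$, $\|f\|=\sup\{\sum_{i=1}^m|f(x_i^* )|: m\in\mathbb N,\ x_i^*\in L^*,\ \sup_{x\in L}\sum_{i=1}^m|x_i^*(x)|\le1\}$. $\mathrm{FBL}\langle L\rangle$ is the norm closure of the vector sublattice generated by $\{\delta_x:x\in L\}$ inside the Banach lattice of positively homogeneous functions on $L^*$ with finite norm, with pointwise order and operations. It satisfies the universal property: for every Banach lattice $X$ and bounded lattice homomorphism $S:L\to X$ there is a unique Banach lattice homomorphism $\widehat S:\mathrm{FBL}\langle L\rangle\to X$ with $\widehat S(\delta_x)=S(x)$ and $\|\widehat S\|=\sup_{x\in L}\|Sx\|$. *)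

theory Defs
  imports Complex_Main
begin

definition lattice_hom :: "('a::lattice \<Rightarrow> 'b::lattice) \<Rightarrow> bool" where
  "lattice_hom T \<longleftrightarrow> (\<forall>a b. T (inf a b) = inf (T a) (T b) \<and> T (sup a b) = sup (T a) (T b))"

definition Lstar :: "('a::distrib_lattice \<Rightarrow> real) set" where
  "Lstar = {xs. lattice_hom xs \<and> (\<forall>x. xs x \<in> {-1..1})}"

text \<open>Functions on L* are represented as functions on all real-valued functions on L
  which vanish outside L* (so that equality is equality on L*).\<close>
definition extensional_Lstar :: "(('a::distrib_lattice \<Rightarrow> real) \<Rightarrow> real) \<Rightarrow> bool" where
  "extensional_Lstar f \<longleftrightarrow> (\<forall>xs. xs \<notin> Lstar \<longrightarrow> f xs = 0)"

definition delta :: "'a::distrib_lattice \<Rightarrow> ('a \<Rightarrow> real) \<Rightarrow> real" where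
  "delta x = (\<lambda>xs. if xs \<in> Lstar then xs x else 0)"

definition pos_homogeneous :: "(('a::distrib_lattice \<Rightarrow> real) \<Rightarrow> real) \<Rightarrow> bool" where
  "pos_homogeneous f \<longleftrightarrow>
     (\<forall>xs \<in> Lstar. \<forall>c::real. c \<ge> 0 \<longrightarrow> (\<lambda>x. c * xs x) \<in> Lstar
        \<longrightarrow> f (\<lambda>x. c * xs x) = c * f xs)"

definition fbl_norm_set :: "(('a::distrib_lattice \<Rightarrow> real) \<Rightarrow> real) \<Rightarrow> real set" where
  "fbl_norm_set f = {(\<Sum>i<m. \<bar>f (xs i)\<bar>) | (m::nat) xs.
      (\<forall>i<m. xs i \<in> Lstar) \<and> (\<forall>x. (\<Sum>i<m. \<bar>xs i x\<bar>) \<le> 1)}"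

definition fbl_norm :: "(('a::distrib_lattice \<Rightarrow> real) \<Rightarrow> real) \<Rightarrow> real" where
  "fbl_norm f = Sup (fbl_norm_set f)"

definition Hspace :: "(('a::distrib_lattice \<Rightarrow> real) \<Rightarrow> real) set" where
  "Hspace = {f. extensional_Lstar f \<and> pos_homogeneous f \<and> bdd_above (fbl_norm_set f)}"

inductive_set gen_sublattice :: "(('a::distrib_lattice \<Rightarrow> real) \<Rightarrow> real) set" where
  gen_delta: "delta x \<in> gen_sublattice"
| gen_add: "f \<in> gen_sublattice \<Longrightarrow> g \<in> gen_sublattice \<Longrightarrow> (\<lambda>xs. f xs + g xs) \<in> gen_sublattice"
| gen_scale: "f \<in> gen_sublattice \<Longrightarrow> (\<lambda>xs. c * f xs) \<in> gen_sublattice"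
| gen_max: "f \<in> gen_sublattice \<Longrightarrow> g \<in> gen_sublattice \<Longrightarrow> (\<lambda>xs. max (f xs) (g xs)) \<in> gen_sublattice"

definition FBL :: "(('a::distrib_lattice \<Rightarrow> real) \<Rightarrow> real) set" where
  "FBL = {f \<in> Hspace. \<forall>e>0. \<exists>g \<in> gen_sublattice. fbl_norm (\<lambda>xs. f xs - g xs) < e}"

definition banach_lattice_hom ::
  "((('a::distrib_lattice \<Rightarrow> real) \<Rightarrow> real) \<Rightarrow> (('b::distrib_lattice \<Rightarrow> real) \<Rightarrow> real)) \<Rightarrow> bool" where
  "banach_lattice_hom S \<longleftrightarrow>
     S ` FBL \<subseteq> FBL \<and>
     (\<forall>f\<in>FBL. \<forall>g\<in>FBL. S (\<lambda>xs. f xs + g xs) = (\<lambda>ys. S f ys + S g ys)) \<and>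
     (\<forall>f\<in>FBL. \<forall>c::real. S (\<lambda>xs. c * f xs) = (\<lambda>ys. c * S f ys)) \<and>
     (\<forall>f\<in>FBL. \<forall>g\<in>FBL. S (\<lambda>xs. max (f xs) (g xs)) = (\<lambda>ys. max (S f ys) (S g ys))) \<and>
     (\<forall>f\<in>FBL. \<forall>g\<in>FBL. S (\<lambda>xs. min (f xs) (g xs)) = (\<lambda>ys. min (S f ys) (S g ys))) \<and>
     (\<exists>C. \<forall>f\<in>FBL. fbl_norm (S f) \<le> C * fbl_norm f)"

end

theory Submission
  imports Defs
begin


lemma Lstar_mono:
  assumes "xs \<in> Lstar" "a \<le> b" shows "xs a \<le> xs b"
proof -
  have h: "xs (sup a b) = sup (xs a) (xs b)" using assms(1) unfolding Lstar_def lattice_hom_def by blast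
  have "sup a b = b" using assms(2) by (rule sup_absorb2)
  with h have "xs b = max (xs a) (xs b)" by (simp add: sup_max)
  thus ?thesis by (metis max.cobounded1)
qed

lemma Lstar_bound: "xs \<in> Lstar \<Longrightarrow> \<bar>xs x\<bar> \<le> 1"
  unfolding Lstar_def by (auto simp: abs_le_iff)

definition clip :: "real \<Rightarrow> ('a \<Rightarrow> real) \<Rightarrow> 'a \<Rightarrow> real" where
  "clip c y = (\<lambda>x. max (-1) (min 1 (y x / c)))"

lemma clip_Lstar:
  assumes "y \<in> Lstar" "c > 0" shows "clip c y \<in> Lstar"
proof -
  have m: "mono (\<lambda>t::real. max (-1) (min 1 (t / c)))"
  proof (rule monoI)
    fix x y :: real assume "x \<le> y"
    hence "x / c \<le> y / c" using assms(2) by (simp add: divide_right_mono)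
    thus "max (-1) (min 1 (x / c)) \<le> max (-1) (min 1 (y / c))" by (auto simp: max_def min_def)
  qed
  have "clip c y (inf a b) = inf (clip c y a) (clip c y b)" for a b
  proof -
    have "y (inf a b) = min (y a) (y b)" using assms(1) unfolding Lstar_def lattice_hom_def by (simp add: inf_min)
    thus ?thesis unfolding clip_def using min_of_mono[OF m] by (simp add: inf_min)
  qed
  moreover have "clip c y (sup a b) = sup (clip c y a) (clip c y b)" for a b
  proof -
    have "y (sup a b) = max (y a) (y b)" using assms(1) unfolding Lstar_def lattice_hom_def by (simp add: sup_max)
    thus ?thesis unfolding clip_def using max_of_mono[OF m] by (simp add: sup_max)
  qed
  ultimately show ?thesis unfolding Lstar_def lattice_hom_def clip_def by auto
qed

lemma clip_eq: "c > 0 \<Longrightarrow> \<bar>y x\<bar> \<le> c \<Longrightarrow> clip c y x = y x / c"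
  unfolding clip_def by (auto simp: divide_le_eq_1 le_divide_eq abs_le_iff)

lemma fbl_norm_set_ne: "0 \<in> fbl_norm_set f"
  unfolding fbl_norm_set_def by (rule CollectI, rule exI[of _ 0], auto)

lemma fbl_norm_nonneg: "bdd_above (fbl_norm_set f) \<Longrightarrow> 0 \<le> fbl_norm f"
  unfolding fbl_norm_def using fbl_norm_set_ne cSup_upper by blast

lemma pointwise_bound:
  assumes "bdd_above (fbl_norm_set f)" "xs \<in> Lstar" shows "\<bar>f xs\<bar> \<le> fbl_norm f"
proof -
  have "\<exists>(m::nat) X. \<bar>f xs\<bar> = (\<Sum>i<m. \<bar>f (X i)\<bar>) \<and> (\<forall>i<m. X i \<in> Lstar) \<and> (\<forall>x. (\<Sum>i<m. \<bar>X i x\<bar>) \<le> 1)"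
    using assms(2) Lstar_bound
    by (intro exI[of _ "Suc 0"] exI[of _ "\<lambda>_. xs"]) auto
  hence "\<bar>f xs\<bar> \<in> fbl_norm_set f" unfolding fbl_norm_set_def by blast
  thus ?thesis unfolding fbl_norm_def using assms(1) cSup_upper by blast
qed

lemma fbl_norm_setE:
  fixes f :: "('a::distrib_lattice \<Rightarrow> real) \<Rightarrow> real"
  assumes "z \<in> fbl_norm_set f"
  obtains m :: nat and X :: "nat \<Rightarrow> 'a \<Rightarrow> real" where "z = (\<Sum>i<m. \<bar>f (X i)\<bar>)"
    "\<forall>i<m. X i \<in> Lstar" "\<forall>x. (\<Sum>i<m. \<bar>X i x\<bar>) \<le> 1"
  using assms unfolding fbl_norm_set_def by blast

lemma bdd_dom:
  fixes p q r :: "('a::distrib_lattice \<Rightarrow> real) \<Rightarrow> real"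
  assumes bp: "bdd_above (fbl_norm_set p)" and bq: "bdd_above (fbl_norm_set q)"
    and al: "\<alpha> \<ge> 0" and be: "\<beta> \<ge> 0"
    and d: "\<forall>xs\<in>Lstar. \<bar>r xs\<bar> \<le> \<alpha> * \<bar>p xs\<bar> + \<beta> * \<bar>q xs\<bar>"
  shows "bdd_above (fbl_norm_set r) \<and> fbl_norm r \<le> \<alpha> * fbl_norm p + \<beta> * fbl_norm q"
proof -
  have *: "z \<le> \<alpha> * fbl_norm p + \<beta> * fbl_norm q" if zin: "z \<in> fbl_norm_set r" for z
  proof -
    obtain m :: nat and X :: "nat \<Rightarrow> 'a \<Rightarrow> real" where z: "z = (\<Sum>i<m. \<bar>r (X i)\<bar>)" and X: "\<forall>i<m. X i \<in> Lstar"
      and Xn: "\<forall>x. (\<Sum>i<m. \<bar>X i x\<bar>) \<le> 1"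
      using zin by (rule fbl_norm_setE)
    have "(\<Sum>i<m. \<bar>p (X i)\<bar>) \<in> fbl_norm_set p" "(\<Sum>i<m. \<bar>q (X i)\<bar>) \<in> fbl_norm_set q"
      unfolding fbl_norm_set_def using X Xn by blast+
    hence l: "(\<Sum>i<m. \<bar>p (X i)\<bar>) \<le> fbl_norm p" "(\<Sum>i<m. \<bar>q (X i)\<bar>) \<le> fbl_norm q"
      unfolding fbl_norm_def using bp bq cSup_upper by blast+
    have "z \<le> (\<Sum>i<m. \<alpha> * \<bar>p (X i)\<bar> + \<beta> * \<bar>q (X i)\<bar>)"
      unfolding z using X d by (intro sum_mono) auto
    also have "\<dots> = \<alpha> * (\<Sum>i<m. \<bar>p (X i)\<bar>) + \<beta> * (\<Sum>i<m. \<bar>q (X i)\<bar>)"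
      by (simp add: sum.distrib sum_distrib_left)
    also have "\<dots> \<le> \<alpha> * fbl_norm p + \<beta> * fbl_norm q"
      using l al be by (intro add_mono mult_left_mono) auto
    finally show ?thesis .
  qed
  show ?thesis
  proof
    show "bdd_above (fbl_norm_set r)" using * by (intro bdd_aboveI) auto
    show "fbl_norm r \<le> \<alpha> * fbl_norm p + \<beta> * fbl_norm q"
      unfolding fbl_norm_def[of r] using * fbl_norm_set_ne by (intro cSup_least) auto
  qed
qed

lemma dom_norm:
  fixes r :: "('a::distrib_lattice \<Rightarrow> real) \<Rightarrow> real"
  assumes e0: "\<And>n. e n \<ge> 0" and se: "summable e"
    and d: "\<forall>xs\<in>Lstar. \<bar>r xs\<bar> \<le> (\<Sum>n. e n * (\<bar>xs (a n)\<bar> + \<bar>xs (b n)\<bar>))"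
  shows "bdd_above (fbl_norm_set r) \<and> fbl_norm r \<le> 2 * suminf e"
proof -
  have sm: "summable (\<lambda>n. e n * (\<bar>xs (a n)\<bar> + \<bar>xs (b n)\<bar>))" if "xs \<in> Lstar" for xs
  proof (rule summable_comparison_test[OF _ summable_mult[OF se, of 2]])
    show "\<exists>N. \<forall>n\<ge>N. norm (e n * (\<bar>xs (a n)\<bar> + \<bar>xs (b n)\<bar>)) \<le> 2 * e n"
    proof (intro exI[of _ 0] allI impI)
      fix n
      have "\<bar>xs (a n)\<bar> + \<bar>xs (b n)\<bar> \<le> 2" using Lstar_bound[OF that, of "a n"] Lstar_bound[OF that, of "b n"] by linarith
      hence "e n * (\<bar>xs (a n)\<bar> + \<bar>xs (b n)\<bar>) \<le> e n * 2" using e0[of n] by (rule mult_left_mono)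
      thus "norm (e n * (\<bar>xs (a n)\<bar> + \<bar>xs (b n)\<bar>)) \<le> 2 * e n" using e0[of n] by (simp add: abs_mult)
    qed
  qed
  have *: "z \<le> 2 * suminf e" if zin: "z \<in> fbl_norm_set r" for z
  proof -
    obtain m :: nat and X :: "nat \<Rightarrow> 'a \<Rightarrow> real" where z: "z = (\<Sum>i<m. \<bar>r (X i)\<bar>)" and X: "\<forall>i<m. X i \<in> Lstar"
      and Xn: "\<forall>x. (\<Sum>i<m. \<bar>X i x\<bar>) \<le> 1"
      using zin by (rule fbl_norm_setE)
    have "z \<le> (\<Sum>i<m. (\<Sum>n. e n * (\<bar>X i (a n)\<bar> + \<bar>X i (b n)\<bar>)))"
      unfolding z using X d by (intro sum_mono) auto
    also have "\<dots> = (\<Sum>n. (\<Sum>i<m. e n * (\<bar>X i (a n)\<bar> + \<bar>X i (b n)\<bar>)))"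
      using X sm by (subst suminf_sum) auto
    also have "\<dots> \<le> (\<Sum>n. 2 * e n)"
    proof (rule suminf_le)
      show "summable (\<lambda>n. \<Sum>i<m. e n * (\<bar>X i (a n)\<bar> + \<bar>X i (b n)\<bar>))"
        using X sm by (intro summable_sum) auto
      show "summable (\<lambda>n. 2 * e n)" using se by (rule summable_mult)
      fix n
      have "(\<Sum>i<m. e n * (\<bar>X i (a n)\<bar> + \<bar>X i (b n)\<bar>)) = e n * ((\<Sum>i<m. \<bar>X i (a n)\<bar>) + (\<Sum>i<m. \<bar>X i (b n)\<bar>))"
        by (simp add: sum_distrib_left distrib_left sum.distrib)
      also have "\<dots> \<le> e n * 2"
      proof (rule mult_left_mono)
        show "(\<Sum>i<m. \<bar>X i (a n)\<bar>) + (\<Sum>i<m. \<bar>X i (b n)\<bar>) \<le> 2"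
          using Xn[rule_format, of "a n"] Xn[rule_format, of "b n"] by linarith
      qed (use e0 in auto)
      finally show "(\<Sum>i<m. e n * (\<bar>X i (a n)\<bar> + \<bar>X i (b n)\<bar>)) \<le> 2 * e n" by simp
    qed
    also have "\<dots> = 2 * suminf e" using se by (rule suminf_mult)
    finally show ?thesis .
  qed
  show ?thesis
  proof
    show "bdd_above (fbl_norm_set r)" using * by (intro bdd_aboveI) auto
    show "fbl_norm r \<le> 2 * suminf e"
      unfolding fbl_norm_def[of r] using * fbl_norm_set_ne by (intro cSup_least) auto
  qed
qed



lemma gen_min:
  assumes "f \<in> gen_sublattice" "g \<in> gen_sublattice"
  shows "(\<lambda>xs. min (f xs) (g xs)) \<in> gen_sublattice"
proof -
  have "(\<lambda>xs. -1 * max (-1 * f xs) (-1 * g xs)) \<in> gen_sublattice"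
    using assms by (intro gen_sublattice.intros)
  moreover have "(\<lambda>xs. -1 * max (-1 * f xs) (-1 * g xs)) = (\<lambda>xs. min (f xs) (g xs))"
    by (auto simp: max_def min_def)
  ultimately show ?thesis by simp
qed

lemma Hspace_bdd: "f \<in> Hspace \<Longrightarrow> bdd_above (fbl_norm_set f)"
  unfolding Hspace_def by auto

lemma bdd_add:
  assumes "bdd_above (fbl_norm_set f)" "bdd_above (fbl_norm_set g)"
  shows "bdd_above (fbl_norm_set (\<lambda>xs. f xs + g xs))"
    "fbl_norm (\<lambda>xs. f xs + g xs) \<le> fbl_norm f + fbl_norm g"
proof -
  have "\<forall>xs\<in>Lstar. \<bar>f xs + g xs\<bar> \<le> 1 * \<bar>f xs\<bar> + 1 * \<bar>g xs\<bar>" by (simp add: abs_triangle_ineq)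
  from bdd_dom[OF assms _ _ this] show "bdd_above (fbl_norm_set (\<lambda>xs. f xs + g xs))"
    "fbl_norm (\<lambda>xs. f xs + g xs) \<le> fbl_norm f + fbl_norm g" by auto
qed

lemma bdd_diff:
  assumes "bdd_above (fbl_norm_set f)" "bdd_above (fbl_norm_set g)"
  shows "bdd_above (fbl_norm_set (\<lambda>xs. f xs - g xs))"
proof -
  have "\<forall>xs\<in>Lstar. \<bar>f xs - g xs\<bar> \<le> 1 * \<bar>f xs\<bar> + 1 * \<bar>g xs\<bar>" by (simp add: abs_triangle_ineq4)
  from bdd_dom[OF assms _ _ this] show ?thesis by auto
qed

lemma bdd_scale:
  assumes "bdd_above (fbl_norm_set f)"
  shows "bdd_above (fbl_norm_set (\<lambda>xs. c * f xs))"
    "fbl_norm (\<lambda>xs. c * f xs) \<le> \<bar>c\<bar> * fbl_norm f"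
proof -
  have "\<forall>xs\<in>Lstar. \<bar>c * f xs\<bar> \<le> \<bar>c\<bar> * \<bar>f xs\<bar> + 0 * \<bar>f xs\<bar>" by (simp add: abs_mult)
  from bdd_dom[OF assms assms _ _ this] show "bdd_above (fbl_norm_set (\<lambda>xs. c * f xs))"
    "fbl_norm (\<lambda>xs. c * f xs) \<le> \<bar>c\<bar> * fbl_norm f" by auto
qed

lemma bdd_max:
  assumes "bdd_above (fbl_norm_set f)" "bdd_above (fbl_norm_set g)"
  shows "bdd_above (fbl_norm_set (\<lambda>xs. max (f xs) (g xs)))"
proof -
  have "\<forall>xs\<in>Lstar. \<bar>max (f xs) (g xs)\<bar> \<le> 1 * \<bar>f xs\<bar> + 1 * \<bar>g xs\<bar>" by auto
  from bdd_dom[OF assms _ _ this] show ?thesis by auto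
qed

lemma gen_Hspace: "f \<in> gen_sublattice \<Longrightarrow> f \<in> Hspace"
proof (induction rule: gen_sublattice.induct)
  case (gen_delta x)
  have "bdd_above (fbl_norm_set (delta x))"
  proof (rule bdd_aboveI)
    fix z assume zin: "z \<in> fbl_norm_set (delta x)"
    obtain m :: nat and X where z: "z = (\<Sum>i<m. \<bar>delta x (X i)\<bar>)" and X: "\<forall>i<m. X i \<in> Lstar"
      and Xn: "\<forall>x. (\<Sum>i<m. \<bar>X i x\<bar>) \<le> 1"
      using zin by (rule fbl_norm_setE)
    have "z = (\<Sum>i<m. \<bar>X i x\<bar>)" unfolding z using X by (intro sum.cong) (auto simp: delta_def)
    thus "z \<le> 1" using Xn by simp
  qed
  thus ?case unfolding Hspace_def extensional_Lstar_def pos_homogeneous_def delta_def by auto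
next
  case (gen_add f g)
  have "bdd_above (fbl_norm_set (\<lambda>xs. f xs + g xs))"
    by (rule bdd_add(1)[OF Hspace_bdd[OF gen_add.IH(1)] Hspace_bdd[OF gen_add.IH(2)]])
  thus ?case using gen_add.IH unfolding Hspace_def extensional_Lstar_def pos_homogeneous_def
    by (auto simp: algebra_simps)
next
  case (gen_scale f c)
  have "bdd_above (fbl_norm_set (\<lambda>xs. c * f xs))"
    by (rule bdd_scale(1)[OF Hspace_bdd[OF gen_scale.IH]])
  thus ?case using gen_scale.IH unfolding Hspace_def extensional_Lstar_def pos_homogeneous_def
    by (auto simp: algebra_simps)
next
  case (gen_max f g)
  have "bdd_above (fbl_norm_set (\<lambda>xs. max (f xs) (g xs)))"
    by (rule bdd_max[OF Hspace_bdd[OF gen_max.IH(1)] Hspace_bdd[OF gen_max.IH(2)]])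
  thus ?case using gen_max.IH unfolding Hspace_def extensional_Lstar_def pos_homogeneous_def
    by (auto simp: max_mult_distrib_left)
qed

lemma zero_norm: "fbl_norm (\<lambda>xs::'a::distrib_lattice \<Rightarrow> real. 0::real) = 0"
proof -
  have "fbl_norm_set (\<lambda>xs::'a::distrib_lattice \<Rightarrow> real. 0::real) \<subseteq> {0}"
    unfolding fbl_norm_set_def by auto
  hence "fbl_norm_set (\<lambda>xs::'a::distrib_lattice \<Rightarrow> real. 0::real) = {0}" using fbl_norm_set_ne[of "\<lambda>xs::'a::distrib_lattice \<Rightarrow> real. 0::real"] by blast
  thus ?thesis unfolding fbl_norm_def by simp
qed

lemma gen_FBL: "f \<in> gen_sublattice \<Longrightarrow> f \<in> FBL"
  unfolding FBL_def by (auto simp: gen_Hspace zero_norm intro!: bexI[of _ f])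

lemma FBL_Hspace: "f \<in> FBL \<Longrightarrow> f \<in> Hspace"
  unfolding FBL_def by auto

lemma FBL_bdd: "f \<in> FBL \<Longrightarrow> bdd_above (fbl_norm_set f)"
  by (rule Hspace_bdd[OF FBL_Hspace])

lemma FBL_add:
  assumes f: "f \<in> FBL" and g: "g \<in> FBL"
  shows "(\<lambda>xs. f xs + g xs) \<in> FBL"
proof -
  have fH: "f \<in> Hspace" and gH: "g \<in> Hspace" using f g by (auto simp: FBL_def)
  have "bdd_above (fbl_norm_set (\<lambda>xs. f xs + g xs))" by (rule bdd_add(1)[OF Hspace_bdd[OF fH] Hspace_bdd[OF gH]])
  hence "(\<lambda>xs. f xs + g xs) \<in> Hspace"
    using fH gH unfolding Hspace_def extensional_Lstar_def pos_homogeneous_def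
    by (auto simp: algebra_simps)
  moreover have "\<exists>h\<in>gen_sublattice. fbl_norm (\<lambda>xs. f xs + g xs - h xs) < e" if e: "e > 0" for e
  proof -
    obtain gf where gf: "gf \<in> gen_sublattice" "fbl_norm (\<lambda>xs. f xs - gf xs) < e/2"
      using f half_gt_zero[OF e] unfolding FBL_def by blast
    obtain gg where gg: "gg \<in> gen_sublattice" "fbl_norm (\<lambda>xs. g xs - gg xs) < e/2"
      using g half_gt_zero[OF e] unfolding FBL_def by blast
    have b1: "bdd_above (fbl_norm_set (\<lambda>xs. f xs - gf xs))"
      by (rule bdd_diff[OF Hspace_bdd[OF fH] Hspace_bdd[OF gen_Hspace[OF gf(1)]]])
    have b2: "bdd_above (fbl_norm_set (\<lambda>xs. g xs - gg xs))"
      by (rule bdd_diff[OF Hspace_bdd[OF gH] Hspace_bdd[OF gen_Hspace[OF gg(1)]]])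
    have eq: "(\<lambda>xs. f xs + g xs - (gf xs + gg xs)) = (\<lambda>xs. (\<lambda>xs. f xs - gf xs) xs + (\<lambda>xs. g xs - gg xs) xs)"
      by (auto simp: algebra_simps)
    have "fbl_norm (\<lambda>xs. f xs + g xs - (gf xs + gg xs)) \<le> fbl_norm (\<lambda>xs. f xs - gf xs) + fbl_norm (\<lambda>xs. g xs - gg xs)"
      unfolding eq by (rule bdd_add(2)[OF b1 b2])
    thus ?thesis using gf gg by (intro bexI[of _ "\<lambda>xs. gf xs + gg xs"]) (auto intro: gen_add)
  qed
  ultimately show ?thesis unfolding FBL_def by auto
qed

lemma FBL_scale:
  assumes f: "f \<in> FBL"
  shows "(\<lambda>xs. c * f xs) \<in> FBL"
proof -
  have fH: "f \<in> Hspace" using f by (auto simp: FBL_def)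
  have "bdd_above (fbl_norm_set (\<lambda>xs. c * f xs))" by (rule bdd_scale(1)[OF Hspace_bdd[OF fH]])
  hence "(\<lambda>xs. c * f xs) \<in> Hspace"
    using fH unfolding Hspace_def extensional_Lstar_def pos_homogeneous_def
    by (auto simp: algebra_simps)
  moreover have "\<exists>h\<in>gen_sublattice. fbl_norm (\<lambda>xs. c * f xs - h xs) < e" if e: "e > 0" for e
  proof -
    have e': "e / (\<bar>c\<bar> + 1) > 0" using e by auto
    obtain gf where gf: "gf \<in> gen_sublattice" "fbl_norm (\<lambda>xs. f xs - gf xs) < e / (\<bar>c\<bar> + 1)"
      using f e' unfolding FBL_def by blast
    have b1: "bdd_above (fbl_norm_set (\<lambda>xs. f xs - gf xs))"
      by (rule bdd_diff[OF Hspace_bdd[OF fH] Hspace_bdd[OF gen_Hspace[OF gf(1)]]])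
    have eq: "(\<lambda>xs. c * f xs - c * gf xs) = (\<lambda>xs. c * (\<lambda>xs. f xs - gf xs) xs)"
      by (auto simp: algebra_simps)
    have "fbl_norm (\<lambda>xs. c * f xs - c * gf xs) \<le> \<bar>c\<bar> * fbl_norm (\<lambda>xs. f xs - gf xs)"
      unfolding eq by (rule bdd_scale(2)[OF b1])
    also have "\<dots> \<le> \<bar>c\<bar> * (e / (\<bar>c\<bar> + 1))" using gf(2) by (intro mult_left_mono) auto
    also have "\<dots> < e" using e by (simp add: field_simps)
    finally show ?thesis using gf by (intro bexI[of _ "\<lambda>xs. c * gf xs"]) (auto intro: gen_scale)
  qed
  ultimately show ?thesis unfolding FBL_def by auto
qed

lemma gen_ext: "f \<in> gen_sublattice \<Longrightarrow> xs \<notin> Lstar \<Longrightarrow> f xs = 0"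
  using gen_Hspace[of f] unfolding Hspace_def extensional_Lstar_def by auto

lemma gen_local:
  "f \<in> gen_sublattice \<Longrightarrow> \<exists>a b. a \<le> b \<and> (\<forall>x\<in>Lstar. \<forall>y\<in>Lstar. \<forall>c\<ge>0.
      (\<forall>s. a \<le> s \<longrightarrow> s \<le> b \<longrightarrow> y s = c * x s) \<longrightarrow> f y = c * f x)"
proof (induction rule: gen_sublattice.induct)
  case (gen_delta x)
  show ?case by (rule exI[of _ x], rule exI[of _ x]) (auto simp: delta_def)
next
  case (gen_add f g)
  then obtain a1 b1 a2 b2 where 1: "a1 \<le> b1" "\<forall>x\<in>Lstar. \<forall>y\<in>Lstar. \<forall>c\<ge>0.
      (\<forall>s. a1 \<le> s \<longrightarrow> s \<le> b1 \<longrightarrow> y s = c * x s) \<longrightarrow> f y = c * f x"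
    and 2: "a2 \<le> b2" "\<forall>x\<in>Lstar. \<forall>y\<in>Lstar. \<forall>c\<ge>0.
      (\<forall>s. a2 \<le> s \<longrightarrow> s \<le> b2 \<longrightarrow> y s = c * x s) \<longrightarrow> g y = c * g x" by blast
  show ?case
  proof (intro exI conjI)
    show "inf a1 a2 \<le> sup b1 b2" using 1(1) by (meson inf.coboundedI1 le_supI1)
    show "\<forall>x\<in>Lstar. \<forall>y\<in>Lstar. \<forall>c\<ge>0. (\<forall>s. inf a1 a2 \<le> s \<longrightarrow> s \<le> sup b1 b2 \<longrightarrow> y s = c * x s)
       \<longrightarrow> f y + g y = c * (f x + g x)"
    proof (intro ballI allI impI)
      fix x y and c :: real assume "x \<in> Lstar" "y \<in> Lstar" "c \<ge> 0"
        and h: "\<forall>s. inf a1 a2 \<le> s \<longrightarrow> s \<le> sup b1 b2 \<longrightarrow> y s = c * x s"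
      have "f y = c * f x" using 1(2) \<open>x \<in> Lstar\<close> \<open>y \<in> Lstar\<close> \<open>c \<ge> 0\<close> h
        by (meson inf.coboundedI1 le_supI1)
      moreover have "g y = c * g x" using 2(2) \<open>x \<in> Lstar\<close> \<open>y \<in> Lstar\<close> \<open>c \<ge> 0\<close> h
        by (meson inf.coboundedI2 le_supI2)
      ultimately show "f y + g y = c * (f x + g x)" by (simp add: algebra_simps)
    qed
  qed
next
  case (gen_scale f d)
  then obtain a b where "a \<le> b" "\<forall>x\<in>Lstar. \<forall>y\<in>Lstar. \<forall>c\<ge>0.
      (\<forall>s. a \<le> s \<longrightarrow> s \<le> b \<longrightarrow> y s = c * x s) \<longrightarrow> f y = c * f x" by blast
  thus ?case by (intro exI[of _ a] exI[of _ b]) (auto simp: algebra_simps)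
next
  case (gen_max f g)
  then obtain a1 b1 a2 b2 where 1: "a1 \<le> b1" "\<forall>x\<in>Lstar. \<forall>y\<in>Lstar. \<forall>c\<ge>0.
      (\<forall>s. a1 \<le> s \<longrightarrow> s \<le> b1 \<longrightarrow> y s = c * x s) \<longrightarrow> f y = c * f x"
    and 2: "a2 \<le> b2" "\<forall>x\<in>Lstar. \<forall>y\<in>Lstar. \<forall>c\<ge>0.
      (\<forall>s. a2 \<le> s \<longrightarrow> s \<le> b2 \<longrightarrow> y s = c * x s) \<longrightarrow> g y = c * g x" by blast
  show ?case
  proof (intro exI conjI)
    show "inf a1 a2 \<le> sup b1 b2" using 1(1) by (meson inf.coboundedI1 le_supI1)
    show "\<forall>x\<in>Lstar. \<forall>y\<in>Lstar. \<forall>c\<ge>0. (\<forall>s. inf a1 a2 \<le> s \<longrightarrow> s \<le> sup b1 b2 \<longrightarrow> y s = c * x s)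
       \<longrightarrow> max (f y) (g y) = c * max (f x) (g x)"
    proof (intro ballI allI impI)
      fix x y and c :: real assume "x \<in> Lstar" "y \<in> Lstar" "c \<ge> 0"
        and h: "\<forall>s. inf a1 a2 \<le> s \<longrightarrow> s \<le> sup b1 b2 \<longrightarrow> y s = c * x s"
      have "f y = c * f x" using 1(2) \<open>x \<in> Lstar\<close> \<open>y \<in> Lstar\<close> \<open>c \<ge> 0\<close> h
        by (meson inf.coboundedI1 le_supI1)
      moreover have "g y = c * g x" using 2(2) \<open>x \<in> Lstar\<close> \<open>y \<in> Lstar\<close> \<open>c \<ge> 0\<close> h
        by (meson inf.coboundedI2 le_supI2)
      moreover have "max (c * p) (c * q) = c * max p q" for p q
        using \<open>c \<ge> 0\<close> by (simp add: max_mult_distrib_left)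
      ultimately show "max (f y) (g y) = c * max (f x) (g x)" by simp
    qed
  qed
qed



lemma clamp_abs: "0 \<le> (q::real) \<Longrightarrow> \<bar>max (min p q) (-1 * q)\<bar> \<le> q"
  by (auto simp: max_def min_def abs_if)

locale setting =
  fixes T :: "'a::distrib_lattice \<Rightarrow> 'b::distrib_lattice"
    and Tbar :: "(('a \<Rightarrow> real) \<Rightarrow> real) \<Rightarrow> (('b \<Rightarrow> real) \<Rightarrow> real)"
  assumes hT: "lattice_hom T"
    and sT: "surj T"
    and hom: "banach_lattice_hom Tbar"
    and dT: "\<And>x. Tbar (delta x) = delta (T x)"
begin

lemma into: "f \<in> FBL \<Longrightarrow> Tbar f \<in> FBL"
  using hom unfolding banach_lattice_hom_def by auto

lemma T_add: "f \<in> FBL \<Longrightarrow> g \<in> FBL \<Longrightarrow> Tbar (\<lambda>xs. f xs + g xs) = (\<lambda>ys. Tbar f ys + Tbar g ys)"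
  using hom unfolding banach_lattice_hom_def by auto
lemma T_scale: "f \<in> FBL \<Longrightarrow> Tbar (\<lambda>xs. c * f xs) = (\<lambda>ys. c * Tbar f ys)"
  using hom unfolding banach_lattice_hom_def by auto
lemma T_max: "f \<in> FBL \<Longrightarrow> g \<in> FBL \<Longrightarrow> Tbar (\<lambda>xs. max (f xs) (g xs)) = (\<lambda>ys. max (Tbar f ys) (Tbar g ys))"
  using hom unfolding banach_lattice_hom_def by auto

lemma comp_Lstar: "(y :: 'b \<Rightarrow> real) \<in> Lstar \<Longrightarrow> (\<lambda>x. y (T x)) \<in> Lstar"
  using hT unfolding Lstar_def lattice_hom_def by auto

lemma E: "f \<in> gen_sublattice \<Longrightarrow> y \<in> Lstar \<Longrightarrow> Tbar f y = f (\<lambda>x. y (T x))"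
proof (induction arbitrary: y rule: gen_sublattice.induct)
  case (gen_delta x)
  thus ?case using comp_Lstar[of y] by (subst dT) (simp add: delta_def)
next
  case (gen_add f g)
  thus ?case by (simp add: T_add gen_FBL)
next
  case (gen_scale f c)
  thus ?case by (simp add: T_scale gen_FBL)
next
  case (gen_max f g)
  thus ?case by (simp add: T_max gen_FBL)
qed

lemma lift_gen: "g \<in> gen_sublattice \<Longrightarrow> \<exists>f\<in>gen_sublattice. Tbar f = g"
proof (induction rule: gen_sublattice.induct)
  case (gen_delta y)
  obtain x where "y = T x" using sT by (metis surjD)
  thus ?case by (intro bexI[of _ "delta x"]) (auto simp: dT intro: gen_sublattice.intros)
next
  case (gen_add f g)
  then obtain f' g' where "f' \<in> gen_sublattice" "g' \<in> gen_sublattice" "Tbar f' = f" "Tbar g' = g" by blast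
  thus ?case by (intro bexI[of _ "\<lambda>xs. f' xs + g' xs"]) (auto simp: T_add gen_FBL intro: gen_sublattice.intros)
next
  case (gen_scale f c)
  then obtain f' where "f' \<in> gen_sublattice" "Tbar f' = f" by blast
  thus ?case by (intro bexI[of _ "\<lambda>xs. c * f' xs"]) (auto simp: T_scale gen_FBL intro: gen_sublattice.intros)
next
  case (gen_max f g)
  then obtain f' g' where "f' \<in> gen_sublattice" "g' \<in> gen_sublattice" "Tbar f' = f" "Tbar g' = g" by blast
  thus ?case by (intro bexI[of _ "\<lambda>xs. max (f' xs) (g' xs)"]) (auto simp: T_max gen_FBL intro: gen_sublattice.intros)
qed

lemma lift_bound:
  assumes f: "f \<in> gen_sublattice"
  shows "\<exists>h a b. h \<in> gen_sublattice \<and> Tbar h = Tbar f \<and>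
     (\<forall>x\<in>Lstar. \<bar>h x\<bar> \<le> fbl_norm (Tbar f) * (\<bar>x a\<bar> + \<bar>x b\<bar>))"
proof -
  obtain a b where ab: "a \<le> b" and Q: "\<forall>x\<in>Lstar. \<forall>y\<in>Lstar. \<forall>c\<ge>0.
      (\<forall>s. a \<le> s \<longrightarrow> s \<le> b \<longrightarrow> y s = c * x s) \<longrightarrow> f y = c * f x"
    using gen_local[OF f] by blast
  define \<epsilon> where "\<epsilon> = fbl_norm (Tbar f)"
  have TfF: "Tbar f \<in> FBL" by (rule into[OF gen_FBL[OF f]])
  hence bT: "bdd_above (fbl_norm_set (Tbar f))" by (rule FBL_bdd)
  have e0: "\<epsilon> \<ge> 0" unfolding \<epsilon>_def using fbl_norm_nonneg[OF bT] .
  have key: "\<bar>f (\<lambda>x. y (T x))\<bar> \<le> \<epsilon> * (\<bar>y (T a)\<bar> + \<bar>y (T b)\<bar>)" if y: "y \<in> Lstar" for y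
  proof -
    define x where "x = (\<lambda>x. y (T x))"
    have xL: "x \<in> Lstar" unfolding x_def using comp_Lstar[OF y] .
    define u where "u = max \<bar>x a\<bar> \<bar>x b\<bar>"
    have rng: "x a \<le> x s \<and> x s \<le> x b" if "a \<le> s" "s \<le> b" for s
      using Lstar_mono[OF xL] that by blast
    show ?thesis
    proof (cases "u = 0")
      case True
      hence "x a = 0" "x b = 0" unfolding u_def by auto
      hence "\<forall>s. a \<le> s \<longrightarrow> s \<le> b \<longrightarrow> x s = 0 * x s" using rng by (metis antisym mult_zero_left)
      hence "f x = 0 * f x" using Q xL by blast
      thus ?thesis using e0 unfolding x_def by simp
    next
      case False
      hence u0: "u > 0" unfolding u_def by auto
      define z where "z = clip u y"
      have zL: "z \<in> Lstar" unfolding z_def using clip_Lstar[OF y u0] .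
      have zTL: "(\<lambda>x. z (T x)) \<in> Lstar" using comp_Lstar[OF zL] .
      have "\<forall>s. a \<le> s \<longrightarrow> s \<le> b \<longrightarrow> x s = u * z (T s)"
      proof (intro allI impI)
        fix s assume "a \<le> s" "s \<le> b"
        hence "\<bar>y (T s)\<bar> \<le> u" using rng[of s] unfolding u_def x_def by auto
        thus "x s = u * z (T s)" unfolding z_def using clip_eq[OF u0, of y "T s"] u0 unfolding x_def by simp
      qed
      hence "f x = u * f (\<lambda>x. z (T x))" using Q xL zTL u0 by auto
      also have "f (\<lambda>x. z (T x)) = Tbar f z" using E[OF f zL] by simp
      finally have "\<bar>f x\<bar> = u * \<bar>Tbar f z\<bar>" using u0 by (simp add: abs_mult)
      also have "\<dots> \<le> u * \<epsilon>" unfolding \<epsilon>_def using pointwise_bound[OF bT zL] u0 by (simp add: mult_left_mono)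
      also have "\<dots> \<le> \<epsilon> * (\<bar>y (T a)\<bar> + \<bar>y (T b)\<bar>)" using e0 unfolding u_def x_def
        by (simp add: mult.commute mult_left_mono)
      finally show ?thesis unfolding x_def .
    qed
  qed
  define w where "w = (\<lambda>xs. max (delta a xs) (-1 * delta a xs) + max (delta b xs) (-1 * delta b xs))"
  have wg: "w \<in> gen_sublattice" unfolding w_def by (intro gen_sublattice.intros)
  have wv: "w x = \<bar>x a\<bar> + \<bar>x b\<bar>" if "x \<in> Lstar" for x
    using that unfolding w_def delta_def by auto
  define h where "h = (\<lambda>xs. max (min (f xs) (\<epsilon> * w xs)) (-1 * (\<epsilon> * w xs)))"
  have hg: "h \<in> gen_sublattice" unfolding h_def using f wg
    by (intro gen_sublattice.intros gen_min)
  have hb: "\<forall>x\<in>Lstar. \<bar>h x\<bar> \<le> \<epsilon> * (\<bar>x a\<bar> + \<bar>x b\<bar>)"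
  proof
    fix x :: "'a \<Rightarrow> real" assume "x \<in> Lstar"
    hence "\<epsilon> * w x \<ge> 0" using e0 wv by simp
    thus "\<bar>h x\<bar> \<le> \<epsilon> * (\<bar>x a\<bar> + \<bar>x b\<bar>)" using wv[OF \<open>x \<in> Lstar\<close>] clamp_abs[of "\<epsilon> * w x" "f x"] unfolding h_def by simp
  qed
  have "Tbar h = Tbar f"
  proof
    fix y :: "'b \<Rightarrow> real"
    show "Tbar h y = Tbar f y"
    proof (cases "y \<in> Lstar")
      case True
      have "\<bar>f (\<lambda>x. y (T x))\<bar> \<le> \<epsilon> * w (\<lambda>x. y (T x))" using key[OF True] wv[OF comp_Lstar[OF True]] by simp
      hence "h (\<lambda>x. y (T x)) = f (\<lambda>x. y (T x))" unfolding h_def by auto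
      thus ?thesis using E[OF hg True] E[OF f True] by simp
    next
      case False
      have "Tbar h \<in> FBL" "Tbar f \<in> FBL" by (rule into[OF gen_FBL[OF hg]], rule TfF)
      thus ?thesis using False unfolding FBL_def Hspace_def extensional_Lstar_def by auto
    qed
  qed
  thus ?thesis using hg hb unfolding \<epsilon>_def by blast
qed

end



lemma half_pow_small: "(0::real) < y \<Longrightarrow> \<exists>n. (1/2::real)^n < y"
  by (rule real_arch_pow_inv) auto

context setting
begin

lemma surj_main: "Tbar ` FBL = FBL"
proof
  show "Tbar ` FBL \<subseteq> FBL" using into by blast
  show "FBL \<subseteq> Tbar ` FBL"
  proof
    fix g :: "('b \<Rightarrow> real) \<Rightarrow> real" assume g: "g \<in> FBL"
    have bg: "bdd_above (fbl_norm_set g)" by (rule FBL_bdd[OF g])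
    have "\<forall>n. \<exists>gn. gn \<in> gen_sublattice \<and> fbl_norm (\<lambda>ys. g ys - gn ys) < (1/2::real)^n"
    proof
      fix n :: nat
      have "(0::real) < (1/2)^n" by simp
      thus "\<exists>gn. gn \<in> gen_sublattice \<and> fbl_norm (\<lambda>ys. g ys - gn ys) < (1/2::real)^n"
        using g unfolding FBL_def by blast
    qed
    then obtain gs where gs: "\<And>n. gs n \<in> gen_sublattice" "\<And>n. fbl_norm (\<lambda>ys. g ys - gs n ys) < (1/2::real)^n"
      by metis
    have bgs: "bdd_above (fbl_norm_set (\<lambda>ys. g ys - gs n ys))" for n
      by (rule bdd_diff[OF bg Hspace_bdd[OF gen_Hspace[OF gs(1)]]])
    have "\<forall>n. \<exists>f. f \<in> gen_sublattice \<and> Tbar f = gs n" using lift_gen gs(1) by blast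
    then obtain fs where fs: "\<And>n. fs n \<in> gen_sublattice" "\<And>n. Tbar (fs n) = gs n" by metis
    define d where "d n = (\<lambda>xs. fs (Suc n) xs + -1 * fs n xs)" for n
    have dg: "d n \<in> gen_sublattice" for n
      unfolding d_def by (intro gen_sublattice.intros fs(1))
    have Td: "Tbar (d n) = (\<lambda>ys. gs (Suc n) ys + -1 * gs n ys)" for n
    proof -
      have "Tbar (d n) = (\<lambda>ys. Tbar (fs (Suc n)) ys + Tbar (\<lambda>xs. -1 * fs n xs) ys)"
        unfolding d_def by (rule T_add[OF gen_FBL[OF fs(1)] FBL_scale[OF gen_FBL[OF fs(1)]]])
      also have "Tbar (\<lambda>xs. -1 * fs n xs) = (\<lambda>ys. -1 * Tbar (fs n) ys)"
        by (rule T_scale[OF gen_FBL[OF fs(1)]])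
      finally show ?thesis by (simp only: fs(2))
    qed
    have nd: "fbl_norm (Tbar (d n)) \<le> 2 * (1/2::real)^n" for n
    proof -
      have "\<forall>ys\<in>Lstar. \<bar>Tbar (d n) ys\<bar> \<le> 1 * \<bar>g ys - gs (Suc n) ys\<bar> + 1 * \<bar>g ys - gs n ys\<bar>"
        unfolding Td by auto
      from bdd_dom[OF bgs bgs _ _ this]
      have "fbl_norm (Tbar (d n)) \<le> fbl_norm (\<lambda>ys. g ys - gs (Suc n) ys) + fbl_norm (\<lambda>ys. g ys - gs n ys)"
        by simp
      also have "\<dots> \<le> (1/2)^(Suc n) + (1/2)^n" using gs(2)[of n] gs(2)[of "Suc n"] by linarith
      also have "\<dots> \<le> 2 * (1/2::real)^n" by simp
      finally show ?thesis .
    qed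
    have "\<forall>n. \<exists>h a b. h \<in> gen_sublattice \<and> Tbar h = Tbar (d n) \<and>
       (\<forall>x\<in>Lstar. \<bar>h x\<bar> \<le> fbl_norm (Tbar (d n)) * (\<bar>x a\<bar> + \<bar>x b\<bar>))"
      using lift_bound[OF dg] by blast
    then obtain hs as bs where hs: "\<And>n. hs n \<in> gen_sublattice" "\<And>n. Tbar (hs n) = Tbar (d n)"
      and hb0: "\<And>n. \<forall>x\<in>Lstar. \<bar>hs n x\<bar> \<le> fbl_norm (Tbar (d n)) * (\<bar>x (as n)\<bar> + \<bar>x (bs n)\<bar>)"
      by metis
    define e where "e n = 2 * (1/2::real)^n" for n
    have e0: "e n \<ge> 0" for n unfolding e_def by simp
    have eshift: "e (n + N) = (2 * (1/2)^N) * (1/2)^n" for n N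
      unfolding e_def by (simp add: power_add)
    have sg: "summable (\<lambda>n. (1/2::real)^n)" by (rule summable_geometric) simp
    have sumE: "summable (\<lambda>n. e (n + N)) \<and> (\<Sum>n. e (n + N)) = 4 * (1/2)^N" for N
    proof -
      have "summable (\<lambda>n. (2 * (1/2)^N) * (1/2::real)^n)" by (rule summable_mult[OF sg])
      moreover have "(\<Sum>n. (2 * (1/2)^N) * (1/2::real)^n) = (2 * (1/2)^N) * (\<Sum>n. (1/2::real)^n)"
        by (rule suminf_mult[OF sg])
      moreover have "(\<Sum>n. (1/2::real)^n) = 2" using suminf_geometric[of "1/2::real"] by simp
      ultimately show ?thesis unfolding eshift by simp
    qed
    have se: "summable e" using sumE[of 0] by simp
    have hb: "\<forall>x\<in>Lstar. \<bar>hs n x\<bar> \<le> e n * (\<bar>x (as n)\<bar> + \<bar>x (bs n)\<bar>)" for n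
    proof
      fix x :: "'a \<Rightarrow> real" assume x: "x \<in> Lstar"
      have "\<bar>hs n x\<bar> \<le> fbl_norm (Tbar (d n)) * (\<bar>x (as n)\<bar> + \<bar>x (bs n)\<bar>)" using hb0 x by blast
      also have "\<dots> \<le> e n * (\<bar>x (as n)\<bar> + \<bar>x (bs n)\<bar>)"
        unfolding e_def by (rule mult_right_mono[OF nd]) simp
      finally show "\<bar>hs n x\<bar> \<le> e n * (\<bar>x (as n)\<bar> + \<bar>x (bs n)\<bar>)" .
    qed
    have hb2: "\<bar>e n * (\<bar>x (as n)\<bar> + \<bar>x (bs n)\<bar>)\<bar> \<le> 2 * e n" if x: "x \<in> Lstar" for n x
    proof -
      have "\<bar>x (as n)\<bar> + \<bar>x (bs n)\<bar> \<le> 2" using Lstar_bound[OF x, of "as n"] Lstar_bound[OF x, of "bs n"] by linarith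
      hence "e n * (\<bar>x (as n)\<bar> + \<bar>x (bs n)\<bar>) \<le> e n * 2" by (rule mult_left_mono) (rule e0)
      thus ?thesis using e0[of n] by (simp add: abs_mult)
    qed
    have hz: "x \<notin> Lstar \<Longrightarrow> hs n x = 0" for n x by (rule gen_ext[OF hs(1)])
    have sbound: "summable (\<lambda>n. e (n + N) * (\<bar>x (as (n + N))\<bar> + \<bar>x (bs (n + N))\<bar>))" if x: "x \<in> Lstar" for x N
    proof (rule summable_comparison_test[OF _ summable_mult[OF conjunct1[OF sumE[of N]], of 2]])
      show "\<exists>M. \<forall>n\<ge>M. norm (e (n + N) * (\<bar>x (as (n + N))\<bar> + \<bar>x (bs (n + N))\<bar>)) \<le> 2 * e (n + N)"
        using hb2[OF x] by auto
    qed
    have sabs: "summable (\<lambda>n. \<bar>hs (n + N) x\<bar>)" for x N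
    proof (cases "x \<in> Lstar")
      case True
      show ?thesis
      proof (rule summable_comparison_test[OF _ sbound[OF True, of N]])
        show "\<exists>M. \<forall>n\<ge>M. norm \<bar>hs (n + N) x\<bar> \<le> e (n + N) * (\<bar>x (as (n + N))\<bar> + \<bar>x (bs (n + N))\<bar>)"
          using hb True by auto
      qed
    next
      case False
      thus ?thesis using hz by simp
    qed
    have summ: "summable (\<lambda>n. hs n x)" for x
      using summable_rabs_cancel[OF sabs[where x=x and N=0]] by simp
    define F where "F = (\<lambda>xs. fs 0 xs + (\<Sum>n. hs n xs))"
    define S where "S N = (\<lambda>xs. fs 0 xs + (\<Sum>n<N. hs n xs))" for N
    have S0: "S 0 = fs 0" unfolding S_def by simp
    have SSuc: "S (Suc N) = (\<lambda>xs. S N xs + hs N xs)" for N unfolding S_def by (auto simp: algebra_simps)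
    have SG: "S N \<in> gen_sublattice" for N
      by (induction N) (simp_all add: S0 SSuc fs(1) hs(1) gen_add)
    have TS: "Tbar (S N) = gs N" for N
    proof (induction N)
      case 0 thus ?case by (simp add: S0 fs(2))
    next
      case (Suc N)
      have "Tbar (S (Suc N)) = (\<lambda>ys. Tbar (S N) ys + Tbar (hs N) ys)"
        unfolding SSuc by (rule T_add[OF gen_FBL[OF SG] gen_FBL[OF hs(1)]])
      thus ?case using Suc by (simp add: hs(2) Td)
    qed
    have tail: "\<forall>x\<in>Lstar. \<bar>F x - S N x\<bar> \<le> (\<Sum>n. e (n + N) * (\<bar>x (as (n + N))\<bar> + \<bar>x (bs (n + N))\<bar>))" for N
    proof
      fix x :: "'a \<Rightarrow> real" assume x: "x \<in> Lstar"
      have "F x - S N x = (\<Sum>n. hs (n + N) x)"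
        unfolding F_def S_def using suminf_split_initial_segment[OF summ[of x], of N] by simp
      hence "\<bar>F x - S N x\<bar> \<le> (\<Sum>n. \<bar>hs (n + N) x\<bar>)" using summable_rabs[OF sabs[where x=x and N=N]] by simp
      also have "\<dots> \<le> (\<Sum>n. e (n + N) * (\<bar>x (as (n + N))\<bar> + \<bar>x (bs (n + N))\<bar>))"
        using hb x by (intro suminf_le sabs sbound[OF x]) auto
      finally show "\<bar>F x - S N x\<bar> \<le> (\<Sum>n. e (n + N) * (\<bar>x (as (n + N))\<bar> + \<bar>x (bs (n + N))\<bar>))" .
    qed
    have tailn: "bdd_above (fbl_norm_set (\<lambda>xs. F xs - S N xs)) \<and> fbl_norm (\<lambda>xs. F xs - S N xs) \<le> 8 * (1/2)^N" for N
    proof -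
      have "bdd_above (fbl_norm_set (\<lambda>xs. F xs - S N xs)) \<and> fbl_norm (\<lambda>xs. F xs - S N xs) \<le> 2 * (\<Sum>n. e (n + N))"
        using dom_norm[of "\<lambda>n. e (n + N)" "\<lambda>xs. F xs - S N xs" "\<lambda>n. as (n + N)" "\<lambda>n. bs (n + N)"]
          e0 sumE[of N] tail[of N] by simp
      thus ?thesis using sumE[of N] by simp
    qed
    have FH: "F \<in> Hspace"
    proof -
      have ext: "extensional_Lstar F"
        unfolding extensional_Lstar_def F_def using hz gen_ext[OF fs(1)] by simp
      have ph: "pos_homogeneous F"
        unfolding pos_homogeneous_def
      proof (intro ballI allI impI)
        fix xs :: "'a \<Rightarrow> real" and c :: real assume xs: "xs \<in> Lstar" and c: "c \<ge> 0" and cx: "(\<lambda>x. c * xs x) \<in> Lstar"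
        have p: "pos_homogeneous f" if "f \<in> gen_sublattice" for f
          using gen_Hspace[OF that] unfolding Hspace_def by blast
        have "fs 0 (\<lambda>x. c * xs x) = c * fs 0 xs" using p[OF fs(1)] xs c cx unfolding pos_homogeneous_def by blast
        moreover have "hs n (\<lambda>x. c * xs x) = c * hs n xs" for n using p[OF hs(1)] xs c cx unfolding pos_homogeneous_def by blast
        ultimately show "F (\<lambda>x. c * xs x) = c * F xs"
          unfolding F_def using suminf_mult[OF summ[of xs], of c] by (simp add: algebra_simps)
      qed
      have "bdd_above (fbl_norm_set (\<lambda>xs. S 0 xs + (\<lambda>xs. F xs - S 0 xs) xs))"
        by (rule bdd_add(1)[OF Hspace_bdd[OF gen_Hspace[OF SG]] conjunct1[OF tailn]])
      hence "bdd_above (fbl_norm_set F)" by simp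
      thus ?thesis using ext ph unfolding Hspace_def by blast
    qed
    have FF: "F \<in> FBL"
    proof -
      have "\<exists>h\<in>gen_sublattice. fbl_norm (\<lambda>xs. F xs - h xs) < \<epsilon>" if ep: "\<epsilon> > 0" for \<epsilon>
      proof -
        obtain N where N: "(1/2::real)^N < \<epsilon> / 8" using half_pow_small[of "\<epsilon>/8"] ep by auto
        show ?thesis using tailn[of N] N SG[of N] by (intro bexI[of _ "S N"]) auto
      qed
      thus ?thesis using FH unfolding FBL_def by blast
    qed
    obtain C where C: "\<forall>f\<in>FBL. fbl_norm (Tbar f) \<le> C * fbl_norm f"
      using hom unfolding banach_lattice_hom_def by blast
    have close: "\<bar>Tbar F y - g y\<bar> \<le> (8 * \<bar>C\<bar> + 1) * (1/2)^N" if y: "y \<in> Lstar" for y N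
    proof -
      define D where "D = (\<lambda>xs. F xs + -1 * S N xs)"
      have DF: "D \<in> FBL" unfolding D_def by (rule FBL_add[OF FF FBL_scale[OF gen_FBL[OF SG]]])
      have TD: "Tbar D = (\<lambda>ys. Tbar F ys + -1 * gs N ys)"
      proof -
        have "Tbar D = (\<lambda>ys. Tbar F ys + Tbar (\<lambda>xs. -1 * S N xs) ys)"
          unfolding D_def by (rule T_add[OF FF FBL_scale[OF gen_FBL[OF SG]]])
        also have "Tbar (\<lambda>xs. -1 * S N xs) = (\<lambda>ys. -1 * Tbar (S N) ys)"
          by (rule T_scale[OF gen_FBL[OF SG]])
        finally show ?thesis by (simp only: TS)
      qed
      have "D = (\<lambda>xs. F xs - S N xs)" unfolding D_def by auto
      hence nD: "fbl_norm D \<le> 8 * (1/2)^N" using tailn[of N] by simp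
      have "fbl_norm (Tbar D) \<le> C * fbl_norm D" using C DF by blast
      also have "\<dots> \<le> \<bar>C\<bar> * fbl_norm D"
        using fbl_norm_nonneg[OF FBL_bdd[OF DF]] by (intro mult_right_mono) auto
      also have "\<dots> \<le> \<bar>C\<bar> * (8 * (1/2)^N)" using nD by (intro mult_left_mono) auto
      finally have nTD: "fbl_norm (Tbar D) \<le> \<bar>C\<bar> * (8 * (1/2)^N)" .
      have "\<bar>Tbar D y\<bar> \<le> fbl_norm (Tbar D)" by (rule pointwise_bound[OF FBL_bdd[OF into[OF DF]] y])
      moreover have "\<bar>g y - gs N y\<bar> \<le> fbl_norm (\<lambda>ys. g ys - gs N ys)"
        using pointwise_bound[OF bgs y, of N] by simp
      moreover have "\<bar>Tbar F y - g y\<bar> \<le> \<bar>Tbar D y\<bar> + \<bar>g y - gs N y\<bar>" unfolding TD by simp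
      ultimately show ?thesis using nTD gs(2)[of N] by (simp add: algebra_simps)
    qed
    have "Tbar F = g"
    proof
      fix y :: "'b \<Rightarrow> real"
      show "Tbar F y = g y"
      proof (cases "y \<in> Lstar")
        case True
        show ?thesis
        proof (rule ccontr)
          assume "Tbar F y \<noteq> g y"
          hence pos: "\<bar>Tbar F y - g y\<bar> / (8 * \<bar>C\<bar> + 1) > 0" by (simp add: add_nonneg_pos)
          obtain N where N: "(1/2::real)^N < \<bar>Tbar F y - g y\<bar> / (8 * \<bar>C\<bar> + 1)"
            using half_pow_small[OF pos] by blast
          hence "(8 * \<bar>C\<bar> + 1) * (1/2)^N < \<bar>Tbar F y - g y\<bar>"
            by (simp add: field_simps add_nonneg_pos)
          thus False using close[OF True, of N] by simp
        qed
      next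
        case False
        have "Tbar F \<in> FBL" by (rule into[OF FF])
        thus ?thesis using g False unfolding FBL_def Hspace_def extensional_Lstar_def by auto
      qed
    qed
    thus "g \<in> Tbar ` FBL" using FF by blast
  qed
qed

end

theorem mainTheorem16:
  fixes T :: "'a::distrib_lattice \<Rightarrow> 'b::distrib_lattice"
    and Tbar :: "(('a \<Rightarrow> real) \<Rightarrow> real) \<Rightarrow> (('b \<Rightarrow> real) \<Rightarrow> real)"
  assumes "lattice_hom T"
    and "surj T"
    and "banach_lattice_hom Tbar"
    and "\<And>x. Tbar (delta x) = delta (T x)"
  shows "Tbar ` FBL = FBL"
proof -
  interpret setting T Tbar using assms by unfold_locales
  show ?thesis by (rule surj_main)
qed

end
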